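(* Let $n\ge 2$ and let $v_1<\cdots<v_{n-1}$ be positive integers with $\mathrm{ML}(v_1,\ldots,v_{n-1})=L$. Let $t_1,\ldots,t_r$ be the (finitely many) times $t\in[0,1)$ at which $\Vert t v_i\Vert\ge L$ for all $1\le i\le n-1$. For each $j$, let $\rho_j$ be the largest index $i$ such that $t_j v_i$ has fractional part $L$, and let $\lambda_j$ be the largest index $i$ such that $t_j v_i$ has fractional part $1-L$. Define $\mu=\min_{1\le j\le r}\min\{\rho_j,\lambda_j\}$, and let $D$ be the least common multiple of the denominators of the $t_j$ written as reduced fractions. Then there is a constant $C$ (depending on $v_1,\ldots,v_{n-1}$) such that for every integer $v_n\ge C$ that is a multiple of $D$, $$\mathrm{ML}(v_1,\ldots,v_n)=\frac{v_n L}{v_n+v_\mu}.$$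
   Context: For a real number $x$, $\Vert x\Vert$ denotes the distance from $x$ to the nearest integer. For positive integers $v_1,\ldots,v_k$, the maximum loneliness is $\mathrm{ML}(v_1,\ldots,v_k)=\max_{t\in\mathbb{R}}\min_{1\le i\le k}\Vert t v_i\Vert$. *)

theory Defs
  imports Complex_Main
begin

definition dist_int :: "real \<Rightarrow> real" where
  "dist_int x = \<bar>x - of_int (round x)\<bar>"

definition max_lonely :: "(nat \<Rightarrow> nat) \<Rightarrow> nat \<Rightarrow> real" where
  "max_lonely v k = (SUP t::real. Min ((\<lambda>i. dist_int (t * real (v i))) ` {1..k}))"

definition lonely_times :: "(nat \<Rightarrow> nat) \<Rightarrow> nat \<Rightarrow> real \<Rightarrow> real set" where
  "lonely_times v k L = {t. 0 \<le> t \<and> t < 1 \<and> (\<forall>i\<in>{1..k}. dist_int (t * real (v i)) \<ge> L)}"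

definition rho_idx :: "(nat \<Rightarrow> nat) \<Rightarrow> nat \<Rightarrow> real \<Rightarrow> real \<Rightarrow> nat" where
  "rho_idx v k L t = Max {i\<in>{1..k}. frac (t * real (v i)) = L}"

definition lambda_idx :: "(nat \<Rightarrow> nat) \<Rightarrow> nat \<Rightarrow> real \<Rightarrow> real \<Rightarrow> nat" where
  "lambda_idx v k L t = Max {i\<in>{1..k}. frac (t * real (v i)) = 1 - L}"

definition mu_idx :: "(nat \<Rightarrow> nat) \<Rightarrow> nat \<Rightarrow> real \<Rightarrow> nat" where
  "mu_idx v k L = Min ((\<lambda>t. min (rho_idx v k L t) (lambda_idx v k L t)) ` lonely_times v k L)"

definition real_denom :: "real \<Rightarrow> int" where
  "real_denom t = snd (quotient_of (THE q. t = of_rat q))"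

definition times_lcm :: "(nat \<Rightarrow> nat) \<Rightarrow> nat \<Rightarrow> real \<Rightarrow> int" where
  "times_lcm v k L = Lcm (real_denom ` lonely_times v k L)"

end

theory Submission
  imports Defs "HOL-Analysis.Analysis"
begin

lemma dist_int_frac: "dist_int x = min (frac x) (1 - frac x)"
  unfolding dist_int_def round_altdef frac_def
  by (cases "x \<in> \<int>") (auto simp: ceiling_altdef split: if_splits)

lemma dist_int_le_int: "dist_int x \<le> \<bar>x - of_int m\<bar>"
proof -
  have "m \<le> \<lfloor>x\<rfloor> \<or> m \<ge> \<lfloor>x\<rfloor> + 1" by linarith
  then show ?thesis unfolding dist_int_frac frac_def
    by (smt (verit, ccfv_SIG) floor_le_iff le_floor_iff of_int_le_iff of_int_add of_int_1 floor_less_iff)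
qed

lemma dist_int_lip: "dist_int x \<le> dist_int y + \<bar>x - y\<bar>"
proof -
  have "dist_int x \<le> \<bar>x - of_int (round y)\<bar>" by (rule dist_int_le_int)
  also have "\<dots> \<le> \<bar>x - y\<bar> + dist_int y" unfolding dist_int_def by linarith
  finally show ?thesis by linarith
qed

lemma dist_int_shift: "dist_int (x + of_int m) = dist_int x"
  unfolding dist_int_frac by simp

lemma dist_int_nonneg: "0 \<le> dist_int x" unfolding dist_int_def by simp
lemma dist_int_half: "dist_int x \<le> 1/2" unfolding dist_int_frac min_def by auto

lemma dist_int_ge_iff: "L \<le> dist_int x \<longleftrightarrow> L \<le> frac x \<and> frac x \<le> 1 - L"
  unfolding dist_int_frac by auto

lemma dist_int_small: "0 \<le> x \<Longrightarrow> x \<le> 1/2 \<Longrightarrow> dist_int x = x"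
  unfolding dist_int_frac
  by (cases "x < 1") (auto simp: frac_eq)

lemma frac_add_small: "0 \<le> b \<Longrightarrow> frac a + b < 1 \<Longrightarrow> frac (a + b) = frac a + b"
proof -
  assume h: "0 \<le> b" "frac a + b < 1"
  have "b < 1" using h frac_ge_0[of a] by linarith
  hence "frac b = b" using h by (simp add: frac_eq)
  thus ?thesis using h frac_add[of a b] by simp
qed

lemma frac_sub_small: "0 \<le> b \<Longrightarrow> b \<le> frac a \<Longrightarrow> frac (a - b) = frac a - b"
proof -
  assume h: "0 \<le> b" "b \<le> frac a"
  have "a - b = of_int \<lfloor>a\<rfloor> + (frac a - b)" unfolding frac_def by simp
  moreover have "frac (frac a - b) = frac a - b" using h frac_lt_1[of a] by (simp add: frac_eq)
  ultimately show ?thesis by (metis add.commute frac_add_of_int_right)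
qed

definition fmin :: "(nat \<Rightarrow> nat) \<Rightarrow> nat \<Rightarrow> real \<Rightarrow> real" where
  "fmin v k t = Min ((\<lambda>i. dist_int (t * real (v i))) ` {1..k})"

lemma fmin_le: "i \<in> {1..k} \<Longrightarrow> fmin v k t \<le> dist_int (t * real (v i))"
  unfolding fmin_def by (rule Min_le) auto

lemma fmin_ge_iff: "k \<ge> 1 \<Longrightarrow> c \<le> fmin v k t \<longleftrightarrow> (\<forall>i\<in>{1..k}. c \<le> dist_int (t * real (v i)))"
  unfolding fmin_def by (subst Min_ge_iff) auto

lemma fmin_attained: "k \<ge> 1 \<Longrightarrow> \<exists>i\<in>{1..k}. fmin v k t = dist_int (t * real (v i))"
proof -
  assume "k \<ge> 1"
  hence "fmin v k t \<in> (\<lambda>i. dist_int (t * real (v i))) ` {1..k}"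
    unfolding fmin_def by (intro Min_in) auto
  thus ?thesis by auto
qed

lemma fmin_half: "k \<ge> 1 \<Longrightarrow> fmin v k t \<le> 1/2"
  using fmin_le[of 1 k v t] dist_int_half[of "t * real (v 1)"] by auto

lemma fmin_shift: "fmin v k (t + of_int m) = fmin v k t"
proof -
  have "dist_int ((t + of_int m) * real (v i)) = dist_int (t * real (v i))" for i
  proof -
    have "(t + of_int m) * real (v i) = t * real (v i) + of_int (m * int (v i))" by (simp add: algebra_simps)
    thus ?thesis using dist_int_shift[of "t * real (v i)" "m * int (v i)"] by simp
  qed
  thus ?thesis unfolding fmin_def by simp
qed

lemma fmin_lip:
  assumes "k \<ge> 1"
  shows "fmin v k t \<le> fmin v k t' + real (\<Sum>i\<in>{1..k}. v i) * \<bar>t - t'\<bar>"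
proof -
  obtain j where j: "j \<in> {1..k}" "fmin v k t' = dist_int (t' * real (v j))"
    using fmin_attained[OF assms] by blast
  have "v j \<le> (\<Sum>i\<in>{1..k}. v i)" using j(1) by (intro member_le_sum) auto
  hence vj: "real (v j) \<le> real (\<Sum>i\<in>{1..k}. v i)" by linarith
  have "fmin v k t \<le> dist_int (t * real (v j))" by (rule fmin_le[OF j(1)])
  also have "\<dots> \<le> dist_int (t' * real (v j)) + \<bar>t * real (v j) - t' * real (v j)\<bar>" by (rule dist_int_lip)
  also have "\<bar>t * real (v j) - t' * real (v j)\<bar> = real (v j) * \<bar>t - t'\<bar>"
    by (simp add: abs_mult left_diff_distrib[symmetric])
  also have "\<dots> \<le> real (\<Sum>i\<in>{1..k}. v i) * \<bar>t - t'\<bar>" using vj by (intro mult_right_mono) auto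
  finally show ?thesis using j(2) by linarith
qed

lemma fmin_cont:
  assumes "k \<ge> 1"
  shows "continuous_on S (fmin v k)"
proof (rule lipschitz_on_continuous_on)
  show "(real (\<Sum>i\<in>{1..k}. v i))-lipschitz_on S (fmin v k)"
  proof (rule lipschitz_onI)
    fix x y assume "x \<in> S" "y \<in> S"
    show "dist (fmin v k x) (fmin v k y) \<le> real (\<Sum>i\<in>{1..k}. v i) * dist x y"
      using fmin_lip[OF assms, of v x y] fmin_lip[OF assms, of v y x] by (simp add: dist_real_def abs_minus_commute)
  qed (simp add: sum_nonneg)
qed

lemma dist_int_neg: "dist_int (- x) = dist_int x"
  unfolding dist_int_frac frac_neg by (auto simp: min_def dest: frac_eq_0_iff[THEN iffD2])

lemma fmin_neg: "fmin v k (- t) = fmin v k t"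
  unfolding fmin_def using dist_int_neg by simp

lemma fmin_split:
  assumes "n = Suc k" "k \<ge> 1"
  shows "fmin (v(n := vn)) n t = min (fmin v k t) (dist_int (t * real vn))"
proof -
  have e: "{1..n} = insert n {1..k}" using assms by auto
  have im: "(\<lambda>i. dist_int (t * real ((v(n := vn)) i))) ` {1..k} = (\<lambda>i. dist_int (t * real (v i))) ` {1..k}"
    using assms by (intro image_cong) auto
  have "fmin (v(n := vn)) n t = Min (insert (dist_int (t * real vn)) ((\<lambda>i. dist_int (t * real ((v(n := vn)) i))) ` {1..k}))"
    unfolding fmin_def e by simp
  also have "\<dots> = min (dist_int (t * real vn)) (fmin v k t)"
    unfolding im fmin_def using assms by (subst Min_insert) auto
  finally show ?thesis by simp
qed

theorem lemma9p4:
  fixes n :: nat and v :: "nat \<Rightarrow> nat" and L :: real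
  assumes "n \<ge> 2"
    and "\<forall>i\<in>{1..n-1}. 0 < v i"
    and "\<forall>i\<in>{1..n-1}. \<forall>j\<in>{1..n-1}. i < j \<longrightarrow> v i < v j"
    and "max_lonely v (n - 1) = L"
  shows "\<exists>C::nat. \<forall>vn::nat. vn \<ge> C \<and> times_lcm v (n - 1) L dvd int vn \<longrightarrow>
           max_lonely (v(n := vn)) n
             = real vn * L / (real vn + real (v (mu_idx v (n - 1) L)))"
proof -
  define k where "k = n - 1"
  have k1: "k \<ge> 1" and nk: "n = Suc k" using assms(1) k_def by auto
  have vpos: "\<And>i. i \<in> {1..k} \<Longrightarrow> 0 < v i" using assms(2) k_def by simp
  have vmono: "\<And>i j. i \<in> {1..k} \<Longrightarrow> j \<in> {1..k} \<Longrightarrow> i \<le> j \<Longrightarrow> v i \<le> v j"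
    using assms(3) k_def by (metis le_neq_implies_less less_imp_le order_refl)
  define f where "f = fmin v k"
  have hML: "max_lonely v k = (SUP t. f t)" unfolding max_lonely_def f_def fmin_def ..
  have fhalf: "\<And>t. f t \<le> 1/2" using fmin_half[OF k1] f_def by simp
  have bdd: "bdd_above (range f)" by (rule bdd_aboveI2[where M="1/2"]) (rule fhalf)
  have L_def: "L = (SUP t. f t)" using assms(4) hML k_def by simp
  have fle: "\<And>t. f t \<le> L" unfolding L_def by (rule cSUP_upper[OF _ bdd]) simp
  have fper: "\<And>t m. f (t + of_int m) = f t" unfolding f_def by (rule fmin_shift)
  have fred: "\<And>t. f t = f (t - of_int \<lfloor>t\<rfloor>)" using fper by (metis diff_add_cancel)
  have frac01: "\<And>t. 0 \<le> t - of_int \<lfloor>t\<rfloor> \<and> t - of_int \<lfloor>t\<rfloor> < 1"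
    by (metis frac_def frac_ge_0 frac_lt_1)
  have cont: "continuous_on S f" for S unfolding f_def by (rule fmin_cont[OF k1])
  obtain x0 where x0: "x0 \<in> {0..1}" "\<And>y. y \<in> {0..1} \<Longrightarrow> f y \<le> f x0"
    using continuous_attains_sup[of "{0..1::real}" f] cont by fastforce
  have x0max: "\<And>t. f t \<le> f x0"
  proof -
    fix t show "f t \<le> f x0" using x0(2)[of "t - of_int \<lfloor>t\<rfloor>"] fred[of t] frac01[of t] by simp
  qed
  have LeqF: "L = f x0" unfolding L_def
    by (rule cSup_eq_maximum) (use x0max in auto)
  have Lhalf: "L \<le> 1/2" using fhalf LeqF by simp
  have Lpos: "0 < L"
  proof -
    define t0 where "t0 = 1 / (2 * real (v k))"
    have vk: "0 < v k" using vpos k1 by simp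
    have "0 < f t0" unfolding f_def
    proof -
      obtain i where i: "i \<in> {1..k}" "fmin v k t0 = dist_int (t0 * real (v i))"
        using fmin_attained[OF k1] by blast
      have vi: "0 < v i" "v i \<le> v k" using vpos vmono i(1) k1 by auto
      have a: "0 < t0 * real (v i)" using vi vk unfolding t0_def by simp
      have b: "t0 * real (v i) \<le> 1/2" using vi vk unfolding t0_def by (simp add: field_simps)
      show "0 < fmin v k t0" using i(2) dist_int_small[of "t0 * real (v i)"] a b by simp
    qed
    thus ?thesis using fle[of t0] by linarith
  qed
  define T where "T = lonely_times v k L"
  have T_iff: "\<And>t. t \<in> T \<longleftrightarrow> 0 \<le> t \<and> t < 1 \<and> L \<le> f t"
    unfolding T_def lonely_times_def f_def using fmin_ge_iff[OF k1] by auto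
  have fL: "\<And>t. t \<in> T \<Longrightarrow> f t = L" using T_iff fle by (meson order_antisym)
  have fracL: "\<And>t i. L \<le> f t \<Longrightarrow> i \<in> {1..k} \<Longrightarrow> L \<le> frac (t * real (v i)) \<and> frac (t * real (v i)) \<le> 1 - L"
    using fmin_ge_iff[OF k1] dist_int_ge_iff f_def by metis
  have up: "\<exists>i\<in>{1..k}. frac (t * real (v i)) = L" if ft: "L \<le> f t" for t
  proof (rule ccontr)
    assume "\<not> ?thesis"
    hence ne: "\<And>i. i \<in> {1..k} \<Longrightarrow> L < frac (t * real (v i))" using fracL[OF ft] by force
    define s where "s = Min ((\<lambda>i. (frac (t * real (v i)) - L) / (2 * real (v i))) ` {1..k})"
    have spos: "0 < s" unfolding s_def using k1 ne vpos by (subst Min_gr_iff) auto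
    have sle: "s \<le> (frac (t * real (v i)) - L) / (2 * real (v i))" if "i \<in> {1..k}" for i
      unfolding s_def using that by (intro Min_le) auto
    have "L < f (t - s)" unfolding f_def
    proof -
      obtain i where i: "i \<in> {1..k}" "fmin v k (t - s) = dist_int ((t - s) * real (v i))"
        using fmin_attained[OF k1] by blast
      define a where "a = frac (t * real (v i))"
      have vi: "0 < real (v i)" using vpos i(1) by simp
      have y: "s * real (v i) \<le> (a - L) / 2" using sle[OF i(1)] vi unfolding a_def by (simp add: field_simps)
      have y0: "0 < s * real (v i)" using spos vi by simp
      have aL: "L < a" "a \<le> 1 - L" using ne[OF i(1)] fracL[OF ft i(1)] unfolding a_def by auto
      have "frac (t * real (v i) - s * real (v i)) = a - s * real (v i)"
        unfolding a_def by (rule frac_sub_small) (use y y0 aL a_def Lpos in auto)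
      moreover have "(t - s) * real (v i) = t * real (v i) - s * real (v i)" by (simp add: algebra_simps)
      ultimately show "L < fmin v k (t - s)" using i(2) y y0 aL unfolding dist_int_frac by auto
    qed
    thus False using fle[of "t - s"] by simp
  qed
  have down: "\<exists>i\<in>{1..k}. frac (t * real (v i)) = 1 - L" if ft: "L \<le> f t" for t
  proof -
    have "L \<le> f (- t)" using ft fmin_neg f_def by metis
    then obtain i where i: "i \<in> {1..k}" "frac (- t * real (v i)) = L" using up by blast
    hence "t * real (v i) \<notin> \<int>" using Lpos frac_neg[of "t * real (v i)"] by auto
    hence "frac (t * real (v i)) = 1 - L" using i(2) frac_neg[of "t * real (v i)"] by simp
    thus ?thesis using i(1) by blast
  qed
  have Tsub: "T \<subseteq> (\<Union>a\<in>{1..k}. \<Union>b\<in>{1..k}. (\<lambda>m. real m / real (v a + v b)) ` {..< v a + v b})"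
  proof
    fix t assume tT: "t \<in> T"
    hence ft: "L \<le> f t" and t01: "0 \<le> t" "t < 1" using T_iff by auto
    obtain a where a: "a \<in> {1..k}" "frac (t * real (v a)) = L" using up[OF ft] by blast
    obtain b where b: "b \<in> {1..k}" "frac (t * real (v b)) = 1 - L" using down[OF ft] by blast
    define N where "N = \<lfloor>t * real (v a)\<rfloor> + \<lfloor>t * real (v b)\<rfloor> + 1"
    have tN: "t * real (v a + v b) = of_int N"
      using a(2) b(2) unfolding N_def frac_def by (simp add: algebra_simps)
    have pos: "0 < real (v a + v b)" using vpos[OF a(1)] by simp
    have N0: "0 \<le> N" using tN t01 pos by (metis of_int_0_le_iff zero_le_mult_iff of_nat_0_le_iff)
    have "of_int N < real (v a + v b)" using tN mult_strict_right_mono[OF t01(2) pos] by simp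
    hence Nlt: "nat N < v a + v b" using N0 by linarith
    have "t = real (nat N) / real (v a + v b)" using tN pos N0 by (simp add: field_simps)
    thus "t \<in> (\<Union>a\<in>{1..k}. \<Union>b\<in>{1..k}. (\<lambda>m. real m / real (v a + v b)) ` {..< v a + v b})"
      using a(1) b(1) Nlt by blast
  qed
  have Tfin: "finite T" by (rule finite_subset[OF Tsub]) auto
  have x0T: "x0 - of_int \<lfloor>x0\<rfloor> \<in> T" using T_iff frac01[of x0] fred[of x0] LeqF by simp
  have Tne: "T \<noteq> {}" using x0T by blast
  have Tint: "t * real vn \<in> \<int>" if tT: "t \<in> T" and dv: "times_lcm v k L dvd int vn" for t vn
  proof -
    obtain a b m where ab: "a \<in> {1..k}" "b \<in> {1..k}" "t = real m / real (v a + v b)"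
      using Tsub tT by blast
    define q :: rat where "q = of_nat m / of_nat (v a + v b)"
    have tq: "t = of_rat q" unfolding q_def ab(3) by (simp add: of_rat_divide of_rat_add)
    have theq: "(THE q. t = of_rat q) = q" using tq by (rule the_equality) (simp add: tq of_rat_eq_iff)
    obtain p d where pd: "quotient_of q = (p, d)" by (cases "quotient_of q")
    have qpd: "q = of_int p / of_int d" using quotient_of_div[OF pd] .
    have d0: "d > 0" using quotient_of_denom_pos[OF pd] .
    have "real_denom t = d" unfolding real_denom_def theq pd by simp
    hence "d dvd times_lcm v k L" unfolding times_lcm_def T_def[symmetric] using tT by (metis dvd_Lcm image_eqI)
    hence "d dvd int vn" using dv by (rule dvd_trans)
    then obtain e where e: "int vn = d * e" by blast
    have "t = real_of_int p / real_of_int d" using tq qpd by (simp add: of_rat_divide)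
    hence "t * real vn = real_of_int p / real_of_int d * real_of_int (d * e)" using e
      by (metis of_int_of_nat_eq)
    also have "\<dots> = real_of_int (p * e)" using d0 by (simp add: field_simps)
    finally show ?thesis by simp
  qed
  define rho where "rho = (\<lambda>t. rho_idx v k L t)"
  define lam where "lam = (\<lambda>t. lambda_idx v k L t)"
  have rho: "rho t \<in> {1..k} \<and> frac (t * real (v (rho t))) = L \<and> (\<forall>i\<in>{1..k}. frac (t * real (v i)) = L \<longrightarrow> i \<le> rho t)"
    if "t \<in> T" for t
  proof -
    have ne: "{i\<in>{1..k}. frac (t * real (v i)) = L} \<noteq> {}" using up[of t] that T_iff by auto
    have fin: "finite {i\<in>{1..k}. frac (t * real (v i)) = L}" by simp
    show ?thesis using Max_in[OF fin ne] Max_ge[OF fin] unfolding rho_def rho_idx_def by auto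
  qed
  have lam: "lam t \<in> {1..k} \<and> frac (t * real (v (lam t))) = 1 - L \<and> (\<forall>i\<in>{1..k}. frac (t * real (v i)) = 1 - L \<longrightarrow> i \<le> lam t)"
    if "t \<in> T" for t
  proof -
    have ne: "{i\<in>{1..k}. frac (t * real (v i)) = 1 - L} \<noteq> {}" using down[of t] that T_iff by auto
    have fin: "finite {i\<in>{1..k}. frac (t * real (v i)) = 1 - L}" by simp
    show ?thesis using Max_in[OF fin ne] Max_ge[OF fin] unfolding lam_def lambda_idx_def by auto
  qed
  define mu where "mu = mu_idx v k L"
  have mu_def2: "mu = Min ((\<lambda>t. min (rho t) (lam t)) ` T)" unfolding mu_def mu_idx_def rho_def lam_def T_def ..
  have "mu \<in> (\<lambda>t. min (rho t) (lam t)) ` T"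
    unfolding mu_def2 using Tfin Tne by (intro Min_in) auto
  then obtain tau where tau: "tau \<in> T" "mu = min (rho tau) (lam tau)" by blast
  have mule: "mu \<le> rho t \<and> mu \<le> lam t" if "t \<in> T" for t
    using Min_le[of "(\<lambda>t. min (rho t) (lam t)) ` T"] Tfin that unfolding mu_def2 by fastforce
  have mu1k: "mu \<in> {1..k}" using tau rho lam by (auto simp: min_def)
  define V where "V = real (v mu)"
  have Vpos: "0 < V" using vpos mu1k V_def by simp
  have Vle: "V \<le> real (v (rho t)) \<and> V \<le> real (v (lam t))" if "t \<in> T" for t
    using mule[OF that] rho[OF that] lam[OF that] mu1k vmono unfolding V_def by auto
  have vkpos: "0 < real (v k)" using vpos k1 by simp
  define \<delta> where "\<delta> = L / real (v k)"
  have \<delta>pos: "0 < \<delta>" unfolding \<delta>_def using Lpos vkpos by simp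
  define S where "S = (\<Union>m\<in>{-1,0,1::int}. (\<lambda>t. t + of_int m) ` T)"
  define K where "K = {0..1::real} - (\<Union>y\<in>S. ball y \<delta>)"
  have Kc: "compact K" unfolding K_def by (intro compact_diff compact_Icc open_UN) auto
  have fK: "f t < L" if "t \<in> K" for t
  proof (rule ccontr)
    assume "\<not> f t < L"
    hence ft: "L \<le> f t" by simp
    have t01: "0 \<le> t" "t \<le> 1" using that K_def by auto
    have "t - of_int \<lfloor>t\<rfloor> \<in> T" using T_iff frac01[of t] fred[of t] ft by simp
    moreover have "\<lfloor>t\<rfloor> \<in> {-1,0,1}" using t01 by (cases "t < 1") (auto simp: floor_eq_iff intro!: floor_unique)
    ultimately have "t \<in> S" unfolding S_def by force
    thus False using that \<delta>pos unfolding K_def by force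
  qed
  obtain \<eta> where \<eta>: "0 < \<eta>" "\<And>t. t \<in> K \<Longrightarrow> f t \<le> L - \<eta>"
  proof (cases "K = {}")
    case True thus ?thesis using that[of L] Lpos by auto
  next
    case False
    then obtain z where z: "z \<in> K" "\<And>y. y \<in> K \<Longrightarrow> f y \<le> f z"
      using continuous_attains_sup[OF Kc False cont] by blast
    show ?thesis using that[of "L - f z"] fK[OF z(1)] z(2) by auto
  qed
  define x where "x = (if mu = lam tau then tau else - tau)"
  have tauT: "L \<le> f tau" using tau(1) T_iff by simp
  have P1: "L \<le> frac (x * real (v i)) \<and> frac (x * real (v i)) \<le> 1 - L" if "i \<in> {1..k}" for i
  proof -
    have "f x = f tau" unfolding x_def f_def using fmin_neg by simp
    thus ?thesis using fracL[OF _ that] tauT by simp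
  qed
  have fneg: "frac (- tau * real (v i)) = 1 - frac (tau * real (v i))" if "i \<in> {1..k}" for i
  proof -
    have "tau * real (v i) \<notin> \<int>"
    proof
      assume "tau * real (v i) \<in> \<int>"
      hence "frac (tau * real (v i)) = 0" by simp
      thus False using fracL[OF tauT that] Lpos by linarith
    qed
    thus ?thesis using frac_neg[of "tau * real (v i)"] by simp
  qed
  have P23: "frac (x * real (v mu)) = 1 - L \<and> (\<forall>i\<in>{1..k}. frac (x * real (v i)) = 1 - L \<longrightarrow> v i \<le> v mu)"
  proof (cases "mu = lam tau")
    case True
    thus ?thesis using lam[OF tau(1)] mu1k vmono unfolding x_def by auto
  next
    case False
    hence mr: "mu = rho tau" using tau(2) by (auto simp: min_def split: if_splits)
    have "frac (x * real (v mu)) = 1 - L" using False fneg[OF mu1k] rho[OF tau(1)] mr unfolding x_def by simp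
    moreover have "v i \<le> v mu" if "i \<in> {1..k}" "frac (x * real (v i)) = 1 - L" for i
    proof -
      have "frac (tau * real (v i)) = L" using that False fneg[OF that(1)] unfolding x_def by simp
      thus ?thesis using rho[OF tau(1)] mr that(1) mu1k vmono by auto
    qed
    ultimately show ?thesis by blast
  qed
  have P4: "x * real vn \<in> \<int>" if "times_lcm v k L dvd int vn" for vn
    using Tint[OF tau(1) that] unfolding x_def by (auto simp: Ints_minus)
  define G where "G = {i\<in>{1..k}. frac (x * real (v i)) \<noteq> 1 - L}"
  define \<gamma> where "\<gamma> = Min (insert 1 ((\<lambda>i. 1 - L - frac (x * real (v i))) ` G))"
  have \<gamma>pos: "0 < \<gamma>" unfolding \<gamma>_def G_def using P1 by (subst Min_gr_iff) force+
  have \<gamma>le: "frac (x * real (v i)) + \<gamma> \<le> 1 - L" if "i \<in> G" for i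
  proof -
    have "\<gamma> \<le> 1 - L - frac (x * real (v i))" unfolding \<gamma>_def using that G_def by (intro Min_le) auto
    thus ?thesis by simp
  qed
  define C :: nat where "C = nat \<lceil>V * L / \<eta> + L * real (v k) / \<gamma>\<rceil> + 1"
  have main: "max_lonely (v(n := vn)) n = real vn * L / (real vn + V)"
    if Cv: "vn \<ge> C" and dv: "times_lcm v k L dvd int vn" for vn
  proof -
    define g where "g = fmin (v(n := vn)) n"
    have gsp: "\<And>t. g t = min (f t) (dist_int (t * real vn))"
      unfolding g_def f_def using fmin_split[OF nk k1] by simp
    have hg: "max_lonely (v(n := vn)) n = (SUP t. g t)" unfolding max_lonely_def g_def fmin_def ..
    define X where "X = V * L / \<eta> + L * real (v k) / \<gamma>"
    have X1: "V * L / \<eta> \<ge> 0" "L * real (v k) / \<gamma> \<ge> 0" using Vpos Lpos \<eta>(1) vkpos \<gamma>pos by auto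
    have "X \<le> real (nat \<lceil>X\<rceil>)" by (rule real_nat_ceiling_ge)
    moreover have "real C \<le> real vn" using Cv by simp
    ultimately have Xv: "X + 1 \<le> real vn" unfolding C_def X_def by simp
    have vnpos: "0 < real vn" using Xv X1 X_def by linarith
    have vn1: "V * L / \<eta> \<le> real vn" "L * real (v k) / \<gamma> \<le> real vn" using Xv X1 X_def by linarith+
    define \<Phi> where "\<Phi> = real vn * L / (real vn + V)"
    define s where "s = L / (real vn + V)"
    have sp: "0 < s" unfolding s_def using Lpos vnpos Vpos by simp
    have \<Phi>s1: "\<Phi> = L - s * V" unfolding \<Phi>_def s_def using vnpos Vpos by (simp add: field_simps)
    have \<Phi>s2: "\<Phi> = s * real vn" unfolding \<Phi>_def s_def by simp
    have sV: "s * V < L" using \<Phi>s2 \<Phi>s1 sp vnpos by (smt (verit) mult_pos_pos)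
    have svk: "s * real (v k) \<le> \<gamma>"
    proof -
      have "L * real (v k) \<le> \<gamma> * real vn" using vn1(2) \<gamma>pos by (simp add: field_simps)
      moreover have "s * real vn \<le> L" using \<Phi>s2 \<Phi>s1 sp Vpos by (smt (verit) mult_pos_pos)
      ultimately have "s * real (v k) * real vn \<le> \<gamma> * real vn"
        using vkpos by (smt (verit) mult.commute mult.left_commute mult_right_mono)
      thus ?thesis using vnpos by simp
    qed
    have \<Phi>L\<eta>: "L - \<eta> \<le> \<Phi>"
    proof -
      have "V * L \<le> \<eta> * real vn" using vn1(1) \<eta>(1) by (simp add: field_simps)
      hence "(L - \<eta>) * (real vn + V) \<le> real vn * L" using \<eta>(1) Vpos
        by (smt (verit) mult_pos_pos right_diff_distrib distrib_left mult.commute)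
      thus ?thesis unfolding \<Phi>_def using vnpos Vpos by (simp add: field_simps)
    qed
    have \<Phi>L: "\<Phi> \<le> L" using \<Phi>s1 sp Vpos by simp
    have upper: "g t \<le> \<Phi>" for t
    proof -
      define t0 where "t0 = t - of_int \<lfloor>t\<rfloor>"
      have gt: "g t = g t0" unfolding t0_def g_def
        using fmin_shift[of "v(n:=vn)" n "t - of_int \<lfloor>t\<rfloor>" "\<lfloor>t\<rfloor>"] by simp
      have t0in: "t0 \<in> {0..1}" using frac01[of t] t0_def by auto
      show ?thesis
      proof (cases "t0 \<in> K")
        case True
        then show ?thesis using gt gsp[of t0] \<eta>(2)[OF True] \<Phi>L\<eta> by linarith
      next
        case False
        then obtain y where yS: "y \<in> S" and yd: "dist y t0 < \<delta>" using t0in K_def by auto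
        have "\<exists>tt\<in>T. \<exists>m::int. y = tt + of_int m" using yS unfolding S_def
          by (auto; metis add.right_neutral diff_conv_add_uminus of_int_0 of_int_1 of_int_minus)
        then obtain tt m where tt: "tt \<in> T" and y: "y = tt + of_int m" by blast
        define \<sigma> where "\<sigma> = t0 - y"
        have \<sigma>\<delta>: "\<bar>\<sigma>\<bar> < \<delta>" using yd unfolding \<sigma>_def dist_real_def by (simp add: abs_minus_commute)
        have fracy: "frac (y * real (v i)) = frac (tt * real (v i))" for i
        proof -
          have "y * real (v i) = tt * real (v i) + of_int (m * int (v i))" unfolding y by (simp add: algebra_simps)
          thus ?thesis using frac_add_of_int_right[of "tt * real (v i)" "m * int (v i)"] by presburger
        qed
        have yvn: "y * real vn \<in> \<int>"
        proof -
          have "y * real vn = tt * real vn + of_int (m * int vn)" unfolding y by (simp add: algebra_simps)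
          thus ?thesis using Tint[OF tt dv] by (metis Ints_add Ints_of_int)
        qed
        then obtain z where z: "y * real vn = of_int z" by (metis Ints_cases)
        have d1: "dist_int (t0 * real vn) \<le> \<bar>\<sigma>\<bar> * real vn"
        proof -
          have "dist_int (t0 * real vn) \<le> \<bar>t0 * real vn - of_int z\<bar>" by (rule dist_int_le_int)
          also have "t0 * real vn - of_int z = \<sigma> * real vn" unfolding \<sigma>_def using z by (simp add: algebra_simps)
          finally show ?thesis by (simp add: abs_mult)
        qed
        have d2: "f t0 \<le> L - \<bar>\<sigma>\<bar> * V"
        proof (cases "\<sigma> \<ge> 0")
          case True
          define i where "i = lam tt"
          have i: "i \<in> {1..k}" "frac (tt * real (v i)) = 1 - L" using lam[OF tt] i_def by auto
          have vi: "real (v i) \<le> real (v k)" "V \<le> real (v i)" using vmono i(1) k1 Vle[OF tt] i_def by auto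
          have "\<sigma> * real (v i) \<le> \<delta> * real (v k)" using True \<sigma>\<delta> vi vkpos
            by (intro mult_mono) auto
          moreover have "\<sigma> * real (v i) \<noteq> \<delta> * real (v k)"
          proof
            assume h: "\<sigma> * real (v i) = \<delta> * real (v k)"
            have "\<sigma> * real (v i) \<le> \<sigma> * real (v k)" using True vi by (intro mult_left_mono) auto
            also have "\<dots> < \<delta> * real (v k)" using \<sigma>\<delta> True vkpos by simp
            finally show False using h by simp
          qed
          ultimately have sv: "\<sigma> * real (v i) < L" unfolding \<delta>_def using vkpos by simp
          have eq: "t0 * real (v i) = y * real (v i) + \<sigma> * real (v i)" unfolding \<sigma>_def by (simp add: algebra_simps)
          have fr: "frac (t0 * real (v i)) = 1 - L + \<sigma> * real (v i)"
            unfolding eq using frac_add_small[of "\<sigma> * real (v i)" "y * real (v i)"] fracy i(2) sv True by simp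
          have "f t0 \<le> dist_int (t0 * real (v i))" unfolding f_def by (rule fmin_le[OF i(1)])
          also have "\<dots> = L - \<sigma> * real (v i)" unfolding dist_int_frac fr using Lhalf True mult_nonneg_nonneg[OF True, of "real (v i)"] by (subst min_absorb2; linarith)
          also have "\<dots> \<le> L - \<bar>\<sigma>\<bar> * V" using True vi by (simp add: mult_left_mono)
          finally show ?thesis .
        next
          case False
          define i where "i = rho tt"
          have i: "i \<in> {1..k}" "frac (tt * real (v i)) = L" using rho[OF tt] i_def by auto
          have vi: "real (v i) \<le> real (v k)" "V \<le> real (v i)" using vmono i(1) k1 Vle[OF tt] i_def by auto
          have s0: "0 \<le> - \<sigma>" using False by simp
          have "- \<sigma> * real (v i) \<le> - \<sigma> * real (v k)" using s0 vi by (intro mult_left_mono) auto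
          also have "\<dots> < \<delta> * real (v k)" using \<sigma>\<delta> False vkpos by (intro mult_strict_right_mono) auto
          finally have sv: "- \<sigma> * real (v i) < L" unfolding \<delta>_def using vkpos by simp
          have eq: "t0 * real (v i) = y * real (v i) - (- \<sigma>) * real (v i)" unfolding \<sigma>_def by (simp add: algebra_simps)
          have fr: "frac (t0 * real (v i)) = L - (- \<sigma>) * real (v i)"
            unfolding eq using frac_sub_small[of "- \<sigma> * real (v i)" "y * real (v i)"] fracy i(2) sv s0 mult_nonneg_nonneg[OF s0, of "real (v i)"] by simp
          have "f t0 \<le> dist_int (t0 * real (v i))" unfolding f_def by (rule fmin_le[OF i(1)])
          also have "\<dots> = L - (- \<sigma>) * real (v i)" unfolding dist_int_frac fr using Lhalf s0 mult_nonneg_nonneg[OF s0, of "real (v i)"] by (subst min_absorb1; linarith)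
          also have "\<dots> \<le> L - \<bar>\<sigma>\<bar> * V" using False vi s0 by (simp add: mult_left_mono)
          finally show ?thesis .
        qed
        have "g t0 \<le> min (L - \<bar>\<sigma>\<bar> * V) (\<bar>\<sigma>\<bar> * real vn)" using gsp[of t0] d1 d2 by linarith
        also have "\<dots> \<le> \<Phi>"
        proof (cases "\<bar>\<sigma>\<bar> \<le> s")
          case True
          hence "\<bar>\<sigma>\<bar> * real vn \<le> s * real vn" using vnpos by (intro mult_right_mono) auto
          thus ?thesis using \<Phi>s2 by linarith
        next
          case False
          hence "s * V \<le> \<bar>\<sigma>\<bar> * V" using Vpos by (intro mult_right_mono) auto
          thus ?thesis using \<Phi>s1 by linarith
        qed
        finally show ?thesis using gt by simp
      qed
    qed
    have lower: "\<Phi> \<le> g (x + s)"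
    proof -
      have "\<Phi> \<le> f (x + s)" unfolding f_def
      proof (subst fmin_ge_iff[OF k1], intro ballI)
        fix i assume i: "i \<in> {1..k}"
        define a where "a = frac (x * real (v i))"
        have eq: "(x + s) * real (v i) = x * real (v i) + s * real (v i)" by (simp add: algebra_simps)
        have y0: "0 \<le> s * real (v i)" using sp by simp
        have vik: "real (v i) \<le> real (v k)" using vmono i k1 by auto
        have aL: "L \<le> a" "a \<le> 1 - L" using P1[OF i] a_def by auto
        show "\<Phi> \<le> dist_int ((x + s) * real (v i))"
        proof (cases "a = 1 - L")
          case True
          have "v i \<le> v mu" using P23 i True a_def by auto
          hence yV: "s * real (v i) \<le> s * V" using sp V_def by (simp add: mult_left_mono)
          have fr: "frac ((x + s) * real (v i)) = a + s * real (v i)" unfolding eq a_def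
            by (rule frac_add_small) (use y0 yV sV True a_def Lpos in auto)
          show ?thesis unfolding dist_int_frac fr using True yV \<Phi>s1 Lhalf y0 by (auto simp: min_def)
        next
          case False
          have iG: "i \<in> G" using i False a_def G_def by auto
          have "s * real (v i) \<le> s * real (v k)" using sp vik by (simp add: mult_left_mono)
          hence "s * real (v i) \<le> \<gamma>" using svk by linarith
          hence le: "a + s * real (v i) \<le> 1 - L" using \<gamma>le[OF iG] a_def by linarith
          have fr: "frac ((x + s) * real (v i)) = a + s * real (v i)" unfolding eq a_def
            by (rule frac_add_small) (use y0 le a_def Lpos in auto)
          show ?thesis unfolding dist_int_frac fr using le aL y0 \<Phi>L by (auto simp: min_def)
        qed
      qed
      moreover have "dist_int ((x + s) * real vn) = \<Phi>"
      proof -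
        obtain z where z: "x * real vn = of_int z" using P4[OF dv] by (metis Ints_cases)
        have "(x + s) * real vn = s * real vn + of_int z" using z by (simp add: algebra_simps)
        hence "dist_int ((x + s) * real vn) = dist_int (s * real vn)" by (simp add: dist_int_shift)
        also have "\<dots> = s * real vn" by (rule dist_int_small) (use sp vnpos \<Phi>s2 \<Phi>L Lhalf in auto)
        finally show ?thesis using \<Phi>s2 by simp
      qed
      ultimately show ?thesis using gsp by simp
    qed
    have "(SUP t. g t) = \<Phi>"
    proof (rule cSup_eq_maximum)
      show "\<Phi> \<in> range g" using lower upper[of "x + s"] by (metis order_antisym rangeI)
    qed (use upper in auto)
    thus ?thesis unfolding hg \<Phi>_def .
  qed
  show ?thesis
    unfolding k_def[symmetric] mu_def[symmetric] V_def[symmetric] using main by blast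
qed

end
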